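(* For $i\in\{1,\dots,m\}$ let $f_i:\mathbb{R}^n\to\mathbb{R}\cup\{\infty\}$ be proper, lower semicontinuous, convex, and bounded below. Let $r>0$, let $\delta:\Lambda\to\mathbb{R}$ be continuous with $\delta(e_i)=0$ for each canonical unit vector $e_i$ and $\delta(\lambda)>0$ otherwise, and let $PA_r(x,\lambda):=-e_{r+\delta(\lambda)}\big(-\sum_{i=1}^m\lambda_ie_rf_i\big)(x)$. Then for every $\lambda\in\Lambda$, $$\operatorname{argmin}_xPA_r(x,\lambda)=\operatorname{argmin}_x\sum_{i=1}^m\lambda_ie_rf_i(x)=\operatorname{argmin}_x\Big(-e_r\Big(-\sum_{i=1}^m\lambda_ie_rf_i\Big)(x)\Big).$$
   Context: $\Lambda=\{\lambda\in\mathbb{R}^m:\lambda_i\ge0,\ \sum_i\lambda_i=1\}$. Moreau envelope $e_rf(x)=\inf_y\{f(y)+\frac r2|y-x|^2\}$. *)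

theory Defs
  imports "HOL-Analysis.Analysis" "HOL-Library.Extended_Real"
begin

definition proper_fun :: "('a \<Rightarrow> ereal) \<Rightarrow> bool" where
  "proper_fun f \<longleftrightarrow> (\<forall>x. f x \<noteq> -\<infinity>) \<and> (\<exists>x. f x \<noteq> \<infinity>)"

definition lsc_fun :: "('a::topological_space \<Rightarrow> ereal) \<Rightarrow> bool" where
  "lsc_fun f \<longleftrightarrow> (\<forall>x. f x \<le> Liminf (at x) f)"

definition convex_efun :: "('a::real_vector \<Rightarrow> ereal) \<Rightarrow> bool" where
  "convex_efun f \<longleftrightarrow> (\<forall>x y t. 0 < t \<and> t < 1 \<longrightarrow>
      f ((1 - t) *\<^sub>R x + t *\<^sub>R y) \<le> ereal (1 - t) * f x + ereal t * f y)"

definition bounded_below_fun :: "('a \<Rightarrow> ereal) \<Rightarrow> bool" where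
  "bounded_below_fun f \<longleftrightarrow> (\<exists>c::real. \<forall>x. ereal c \<le> f x)"

definition moreau_env :: "real \<Rightarrow> ('a::real_normed_vector \<Rightarrow> ereal) \<Rightarrow> 'a \<Rightarrow> ereal" where
  "moreau_env r f x = (INF y. f y + ereal (r / 2 * (norm (y - x))\<^sup>2))"

definition argmin_set :: "('a \<Rightarrow> ereal) \<Rightarrow> 'a set" where
  "argmin_set \<phi> = {x. \<forall>y. \<phi> x \<le> \<phi> y}"

definition prob_simplex :: "(real^'m::finite) set" where
  "prob_simplex = {l. (\<forall>i. 0 \<le> l $ i) \<and> (\<Sum>i\<in>UNIV. l $ i) = 1}"

definition wsum_env :: "real \<Rightarrow> ('m::finite \<Rightarrow> 'a::real_normed_vector \<Rightarrow> ereal) \<Rightarrow> real^'m \<Rightarrow> 'a \<Rightarrow> ereal" where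
  "wsum_env r f l x = (\<Sum>i\<in>UNIV. ereal (l $ i) * moreau_env r (f i) x)"

definition PA :: "real \<Rightarrow> (real^'m::finite \<Rightarrow> real) \<Rightarrow> ('m \<Rightarrow> 'a::real_normed_vector \<Rightarrow> ereal) \<Rightarrow> 'a \<Rightarrow> real^'m \<Rightarrow> ereal" where
  "PA r \<delta> f x l = - moreau_env (r + \<delta> l) (\<lambda>y. - wsum_env r f l y) x"

end

theory Submission
  imports Defs
begin

lemma env_fin:
  fixes f :: "'a::real_normed_vector \<Rightarrow> ereal"
  assumes "proper_fun f" "bounded_below_fun f" "r > 0"
  shows "\<exists>e. moreau_env r f x = ereal e"
proof -
  obtain c where c: "\<And>y. ereal c \<le> f y" using assms(2) unfolding bounded_below_fun_def by blast
  obtain y0 where y0: "f y0 \<noteq> \<infinity>" using assms(1) unfolding proper_fun_def by blast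
  have y0': "f y0 \<noteq> -\<infinity>" using assms(1) unfolding proper_fun_def by blast
  have lo: "ereal c \<le> moreau_env r f x"
    unfolding moreau_env_def
  proof (rule INF_greatest)
    fix y
    have "ereal c + 0 \<le> f y + ereal (r / 2 * (norm (y - x))\<^sup>2)"
      apply (rule add_mono) using c assms(3) by auto
    then show "ereal c \<le> f y + ereal (r / 2 * (norm (y - x))\<^sup>2)" by simp
  qed
  have hi: "moreau_env r f x \<le> f y0 + ereal (r / 2 * (norm (y0 - x))\<^sup>2)"
    unfolding moreau_env_def by (rule INF_lower) simp
  have "f y0 + ereal (r / 2 * (norm (y0 - x))\<^sup>2) < \<infinity>" using y0 y0' by auto
  with hi have h1: "moreau_env r f x \<noteq> \<infinity>" by auto
  from lo have h2: "moreau_env r f x \<noteq> -\<infinity>" by auto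
  show ?thesis using h1 h2 by (cases "moreau_env r f x") auto
qed

lemma E1:
  fixes f :: "'a::real_normed_vector \<Rightarrow> ereal"
  assumes "moreau_env r f x = ereal e" "f z = ereal a"
  shows "e \<le> a + r / 2 * (norm (z - x))\<^sup>2"
proof -
  have "moreau_env r f x \<le> f z + ereal (r / 2 * (norm (z - x))\<^sup>2)"
    unfolding moreau_env_def by (rule INF_lower) simp
  then show ?thesis using assms by simp
qed

lemma E2:
  fixes f :: "'a::real_normed_vector \<Rightarrow> ereal"
  assumes "proper_fun f" "moreau_env r f x = ereal e" "\<epsilon> > 0"
  shows "\<exists>z a. f z = ereal a \<and> a + r / 2 * (norm (z - x))\<^sup>2 < e + \<epsilon>"
proof -
  have "moreau_env r f x < ereal (e + \<epsilon>)" using assms by simp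
  then obtain z where z: "f z + ereal (r / 2 * (norm (z - x))\<^sup>2) < ereal (e + \<epsilon>)"
    unfolding moreau_env_def INF_less_iff by blast
  have h1: "f z \<noteq> -\<infinity>" using assms(1) unfolding proper_fun_def by blast
  have h2: "f z \<noteq> \<infinity>" using z by auto
  obtain a where "f z = ereal a" using h1 h2 by (cases "f z") auto
  then show ?thesis using z by auto
qed

lemma E3:
  fixes f :: "'a::real_normed_vector \<Rightarrow> ereal"
  assumes "proper_fun f" "moreau_env r f x = ereal e" "\<And>z a. f z = ereal a \<Longrightarrow> b \<le> a + r / 2 * (norm (z - x))\<^sup>2"
  shows "b \<le> e"
proof -
  have "ereal b \<le> moreau_env r f x"
    unfolding moreau_env_def
  proof (rule INF_greatest)
    fix z
    show "ereal b \<le> f z + ereal (r / 2 * (norm (z - x))\<^sup>2)"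
    proof (cases "f z")
      case (real a) then show ?thesis using assms(3)[of z a] by simp
    qed (use assms(1) in \<open>auto simp: proper_fun_def\<close>)
  qed
  then show ?thesis using assms by simp
qed

lemma G1:
  fixes g :: "'a::real_normed_vector \<Rightarrow> real"
  shows "ereal (g x) \<le> - moreau_env s (\<lambda>y. - ereal (g y)) x"
proof -
  have "moreau_env s (\<lambda>y. - ereal (g y)) x \<le> - ereal (g x) + ereal (s / 2 * (norm (x - x))\<^sup>2)"
    unfolding moreau_env_def by (rule INF_lower) simp
  then have "moreau_env s (\<lambda>y. - ereal (g y)) x \<le> ereal (- g x)" by simp
  then show ?thesis by (metis ereal_minus_le_minus ereal_uminus_uminus uminus_ereal.simps(1))
qed

lemma G2:
  fixes g :: "'a::real_normed_vector \<Rightarrow> real"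
  assumes "r \<le> s"
  shows "- moreau_env s (\<lambda>y. - ereal (g y)) x \<le> - moreau_env r (\<lambda>y. - ereal (g y)) x"
proof -
  have "moreau_env r (\<lambda>y. - ereal (g y)) x \<le> moreau_env s (\<lambda>y. - ereal (g y)) x"
    unfolding moreau_env_def
  proof (rule INF_mono)
    fix y show "\<exists>m\<in>UNIV. - ereal (g m) + ereal (r / 2 * (norm (m - x))\<^sup>2)
        \<le> - ereal (g y) + ereal (s / 2 * (norm (y - x))\<^sup>2)"
      using assms by (intro bexI[of _ y]) (auto intro: mult_right_mono)
  qed
  then show ?thesis by simp
qed

lemma G3:
  fixes g :: "'a::real_normed_vector \<Rightarrow> real"
  assumes "\<And>y. g y - s / 2 * (norm (y - x))\<^sup>2 \<le> b"
  shows "- moreau_env s (\<lambda>y. - ereal (g y)) x \<le> ereal b"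
proof -
  have "ereal (- b) \<le> moreau_env s (\<lambda>y. - ereal (g y)) x"
    unfolding moreau_env_def
  proof (rule INF_greatest)
    fix y show "ereal (- b) \<le> - ereal (g y) + ereal (s / 2 * (norm (y - x))\<^sup>2)"
      using assms[of y] by simp
  qed
  then show ?thesis by (simp add: ereal_uminus_le_reorder)
qed

lemma three_pt:
  fixes z p v :: "'a::real_inner"
  shows "(norm (z - (p - t *\<^sub>R v)))\<^sup>2 + t * (norm (z - (p + v)))\<^sup>2
     = (1 + t) * (norm (z - p))\<^sup>2 + (t^2 + t) * (norm v)\<^sup>2"
proof -
  define w where "w = z - p"
  have a: "z - (p - t *\<^sub>R v) = w + t *\<^sub>R v" "z - (p + v) = w - v" unfolding w_def by (auto simp: algebra_simps)
  have h1: "(w + t *\<^sub>R v) \<bullet> (w + t *\<^sub>R v) = w \<bullet> w + 2 * t * (w \<bullet> v) + t^2 * (v \<bullet> v)"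
    unfolding inner_add_left inner_add_right inner_scaleR_left inner_scaleR_right inner_commute[of v w]
    by (simp add: power2_eq_square algebra_simps)
  have h2: "(w - v) \<bullet> (w - v) = w \<bullet> w - 2 * (w \<bullet> v) + (v \<bullet> v)"
    unfolding inner_diff_left inner_diff_right inner_commute[of v w] by simp
  show ?thesis unfolding a w_def[symmetric] power2_norm_eq_inner h1 h2
    by (simp add: algebra_simps power2_eq_square)
qed

lemma var_id:
  fixes z :: "'m::finite \<Rightarrow> 'a::real_inner" and l :: "'m \<Rightarrow> real"
  assumes "sum l UNIV = 1"
  shows "(\<Sum>i\<in>UNIV. l i * (norm (z i - w))\<^sup>2)
     = (\<Sum>i\<in>UNIV. l i * (norm (z i))\<^sup>2) - 2 * inner (\<Sum>i\<in>UNIV. l i *\<^sub>R z i) w + (norm w)\<^sup>2"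
proof -
  have "(\<Sum>i\<in>UNIV. l i * (norm (z i - w))\<^sup>2)
      = (\<Sum>i\<in>UNIV. l i * (norm (z i))\<^sup>2 - 2 * (l i * inner (z i) w) + l i * (norm w)\<^sup>2)"
    by (rule sum.cong) (auto simp: power2_norm_eq_inner inner_diff_left inner_diff_right inner_commute algebra_simps)
  also have "\<dots> = (\<Sum>i\<in>UNIV. l i * (norm (z i))\<^sup>2) - 2 * (\<Sum>i\<in>UNIV. l i * inner (z i) w) + sum l UNIV * (norm w)\<^sup>2"
    by (simp add: sum.distrib sum_subtractf sum_distrib_left sum_distrib_right)
  also have "(\<Sum>i\<in>UNIV. l i * inner (z i) w) = inner (\<Sum>i\<in>UNIV. l i *\<^sub>R z i) w"
    by (simp add: inner_sum_left)
  finally show ?thesis using assms by simp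
qed

lemma abstract_argmin:
  fixes g :: "'a::real_normed_vector \<Rightarrow> real"
  assumes hC: "\<And>p y. (\<And>y. g p \<le> g y) \<Longrightarrow> g y - r / 2 * (norm (y - p))\<^sup>2 \<le> g p"
    and hB: "\<And>y \<epsilon>. \<epsilon> > 0 \<Longrightarrow> \<exists>x'. \<forall>w. g w - r / 2 * (norm (w - x'))\<^sup>2 \<le> g y + \<epsilon>"
    and rs: "r \<le> s"
  shows "argmin_set (\<lambda>x. - moreau_env s (\<lambda>y. - ereal (g y)) x) = argmin_set (\<lambda>x. ereal (g x))"
proof (intro set_eqI iffI)
  let ?G = "\<lambda>s x. - moreau_env s (\<lambda>y. - ereal (g y)) x"
  fix x
  {
    assume "x \<in> argmin_set (\<lambda>x. ereal (g x))"
    then have m: "\<And>y. g x \<le> g y" unfolding argmin_set_def by auto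
    have "?G r x \<le> ereal (g x)" by (rule G3) (use hC[OF m] in auto)
    then have a: "?G s x \<le> ereal (g x)" by (rule order_trans[OF G2[OF rs]])
    show "x \<in> argmin_set (?G s)" unfolding argmin_set_def
    proof (intro CollectI allI)
      fix y
      have "ereal (g x) \<le> ereal (g y)" using m by simp
      also have "\<dots> \<le> ?G s y" by (rule G1)
      finally show "?G s x \<le> ?G s y" by (rule order_trans[OF a])
    qed
  }
  {
    assume "x \<in> argmin_set (?G s)"
    then have m: "\<And>y. ?G s x \<le> ?G s y" unfolding argmin_set_def by auto
    show "x \<in> argmin_set (\<lambda>x. ereal (g x))" unfolding argmin_set_def
    proof (intro CollectI allI)
      fix y
      have "g x \<le> g y + \<epsilon>" if ep: "\<epsilon> > 0" for \<epsilon>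
      proof -
        obtain x' where x': "\<And>w. g w - r / 2 * (norm (w - x'))\<^sup>2 \<le> g y + \<epsilon>" using hB[OF ep] by blast
        have "ereal (g x) \<le> ?G s x" by (rule G1)
        also have "\<dots> \<le> ?G s x'" by (rule m)
        also have "\<dots> \<le> ?G r x'" by (rule G2[OF rs])
        also have "\<dots> \<le> ereal (g y + \<epsilon>)" by (rule G3) (use x' in auto)
        finally show ?thesis by simp
      qed
      then have "g x \<le> g y" by (rule field_le_epsilon)
      then show "ereal (g x) \<le> ereal (g y)" by simp
    qed
  }
qed

theorem mainTheorem6:
  fixes f :: "'m::finite \<Rightarrow> (real^'n::finite) \<Rightarrow> ereal"
    and r :: real and \<delta> :: "real^'m \<Rightarrow> real" and l :: "real^'m"
  assumes "\<And>i. proper_fun (f i)" "\<And>i. lsc_fun (f i)" "\<And>i. convex_efun (f i)"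
    "\<And>i. bounded_below_fun (f i)"
    and "r > 0"
    and "continuous_on prob_simplex \<delta>"
    and "\<And>i. \<delta> (axis i 1) = 0"
    and "\<And>\<mu>. \<mu> \<in> prob_simplex \<Longrightarrow> \<mu> \<notin> range (\<lambda>i. axis i 1) \<Longrightarrow> \<delta> \<mu> > 0"
    and "l \<in> prob_simplex"
  shows "argmin_set (\<lambda>x. PA r \<delta> f x l) = argmin_set (wsum_env r f l)
       \<and> argmin_set (wsum_env r f l)
         = argmin_set (\<lambda>x. - moreau_env r (\<lambda>y. - wsum_env r f l y) x)"
proof -
  note hprop = assms(1) and bb = assms(4) and rpos = assms(5)
  have lnn: "\<And>i. 0 \<le> l $ i" and lsum: "(\<Sum>i\<in>UNIV. l $ i) = 1"
    using assms(9) unfolding prob_simplex_def by auto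
  have dnn: "0 \<le> \<delta> l"
  proof (cases "l \<in> range (\<lambda>i. axis i 1)")
    case True then show ?thesis using assms(7) by auto
  next
    case False then show ?thesis using assms(8)[OF assms(9)] by fastforce
  qed
  define E where "E i x = real_of_ereal (moreau_env r (f i) x)" for i x
  have Eeq: "moreau_env r (f i) x = ereal (E i x)" for i x
    using env_fin[OF hprop bb rpos, of i x] unfolding E_def by auto
  define g where "g x = (\<Sum>i\<in>UNIV. l $ i * E i x)" for x
  have weq: "wsum_env r f l = (\<lambda>x. ereal (g x))"
    by (rule ext) (simp add: wsum_env_def Eeq g_def)
  have peq: "(\<lambda>x. PA r \<delta> f x l) = (\<lambda>x. - moreau_env (r + \<delta> l) (\<lambda>y. - ereal (g y)) x)"
    by (rule ext) (simp add: PA_def weq)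
  have hC: "g y - r / 2 * (norm (y - p))\<^sup>2 \<le> g p" if pm: "\<And>y. g p \<le> g y" for p y
  proof -
    define v where "v = y - p"
    have yv: "y = p + v" unfolding v_def by simp
    have tri: "E i (p - t *\<^sub>R v) + t * E i (p + v) \<le> (1 + t) * E i p + r / 2 * (t^2 + t) * (norm v)\<^sup>2"
      if tp: "t > 0" for i t
    proof -
      let ?c = "r / 2 * (t^2 + t) * (norm v)\<^sup>2"
      have "(E i (p - t *\<^sub>R v) + t * E i (p + v) - ?c) / (1 + t) \<le> E i p"
      proof (rule E3[OF hprop Eeq])
        fix z a assume fz: "f i z = ereal a"
        have e1: "E i (p - t *\<^sub>R v) \<le> a + r / 2 * (norm (z - (p - t *\<^sub>R v)))\<^sup>2" by (rule E1[OF Eeq fz])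
        have e2: "E i (p + v) \<le> a + r / 2 * (norm (z - (p + v)))\<^sup>2" by (rule E1[OF Eeq fz])
        have "E i (p - t *\<^sub>R v) + t * E i (p + v)
            \<le> (a + r / 2 * (norm (z - (p - t *\<^sub>R v)))\<^sup>2) + t * (a + r / 2 * (norm (z - (p + v)))\<^sup>2)"
          using e1 e2 tp by (intro add_mono mult_left_mono) auto
        also have "\<dots> = (1 + t) * a + r / 2 * ((norm (z - (p - t *\<^sub>R v)))\<^sup>2 + t * (norm (z - (p + v)))\<^sup>2)"
          by (simp add: algebra_simps)
        also have "\<dots> = (1 + t) * (a + r / 2 * (norm (z - p))\<^sup>2) + ?c"
          unfolding three_pt by (simp add: algebra_simps)
        finally show "(E i (p - t *\<^sub>R v) + t * E i (p + v) - ?c) / (1 + t) \<le> a + r / 2 * (norm (z - p))\<^sup>2"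
          using tp by (simp add: pos_divide_le_eq mult.commute)
      qed
      then show ?thesis using tp by (simp add: pos_divide_le_eq mult.commute)
    qed
    have sumtri: "g (p - t *\<^sub>R v) + t * g (p + v) \<le> (1 + t) * g p + r / 2 * (t^2 + t) * (norm v)\<^sup>2"
      if tp: "t > 0" for t
    proof -
      have "g (p - t *\<^sub>R v) + t * g (p + v) = (\<Sum>i\<in>UNIV. l $ i * (E i (p - t *\<^sub>R v) + t * E i (p + v)))"
        unfolding g_def by (simp add: sum.distrib sum_distrib_left algebra_simps)
      also have "\<dots> \<le> (\<Sum>i\<in>UNIV. l $ i * ((1 + t) * E i p + r / 2 * (t^2 + t) * (norm v)\<^sup>2))"
        by (intro sum_mono mult_left_mono tri[OF tp] lnn)
      also have "\<dots> = (\<Sum>i\<in>UNIV. (1 + t) * (l $ i * E i p) + l $ i * (r / 2 * (t^2 + t) * (norm v)\<^sup>2))"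
        by (rule sum.cong) (auto simp: algebra_simps)
      also have "\<dots> = (1 + t) * g p + (\<Sum>i\<in>UNIV. l $ i) * (r / 2 * (t^2 + t) * (norm v)\<^sup>2)"
        unfolding g_def by (simp only: sum.distrib sum_distrib_left[symmetric] sum_distrib_right[symmetric])
      finally show ?thesis using lsum by simp
    qed
    have "g y - r / 2 * (norm v)\<^sup>2 \<le> g p + t * (r / 2 * (norm v)\<^sup>2)" if tp: "t > 0" for t
    proof -
      have "t * g (p + v) \<le> t * g p + r / 2 * (t^2 + t) * (norm v)\<^sup>2"
        using sumtri[OF tp] pm[of "p - t *\<^sub>R v"] distrib_right[of 1 t "g p"] by linarith
      then have "t * (g (p + v) - r / 2 * (norm v)\<^sup>2) \<le> t * (g p + t * (r / 2 * (norm v)\<^sup>2))"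
        by (simp add: algebra_simps power2_eq_square add_divide_distrib)
      then show ?thesis using tp yv by simp
    qed
    then have "g y - r / 2 * (norm v)\<^sup>2 \<le> g p"
    proof -
      assume h: "\<And>t. t > 0 \<Longrightarrow> g y - r / 2 * (norm v)\<^sup>2 \<le> g p + t * (r / 2 * (norm v)\<^sup>2)"
      have "g y - r / 2 * (norm v)\<^sup>2 \<le> g p + \<epsilon>" if ep: "\<epsilon> > 0" for \<epsilon>
      proof -
        have k: "0 \<le> r / 2 * (norm v)\<^sup>2" using rpos by simp
        define t where "t = \<epsilon> / (r / 2 * (norm v)\<^sup>2 + 1)"
        have t0: "t > 0" unfolding t_def using ep k by simp
        have "t * (r / 2 * (norm v)\<^sup>2) \<le> \<epsilon>"
          unfolding t_def using ep k by (simp add: divide_le_eq field_simps)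
        then show ?thesis using h[OF t0] by linarith
      qed
      then show ?thesis by (rule field_le_epsilon)
    qed
    then show ?thesis unfolding v_def .
  qed
  have hB: "\<exists>x'. \<forall>w. g w - r / 2 * (norm (w - x'))\<^sup>2 \<le> g y + \<epsilon>" if ep: "\<epsilon> > 0" for y \<epsilon>
  proof -
    have "\<forall>i. \<exists>za. f i (fst za) = ereal (snd za) \<and> snd za + r / 2 * (norm (fst za - y))\<^sup>2 < E i y + \<epsilon>"
      using E2[OF hprop Eeq ep] by auto
    then obtain za where za: "\<And>i. f i (fst (za i)) = ereal (snd (za i)) \<and> snd (za i) + r / 2 * (norm (fst (za i) - y))\<^sup>2 < E i y + \<epsilon>"
      by metis
    define z where "z i = fst (za i)" for i
    define a where "a i = snd (za i)" for i
    have fz: "f i (z i) = ereal (a i)" and az: "a i + r / 2 * (norm (z i - y))\<^sup>2 < E i y + \<epsilon>" for i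
      using za[of i] unfolding z_def a_def by auto
    define x' where "x' = (\<Sum>i\<in>UNIV. l $ i *\<^sub>R z i)"
    have lsum': "sum (\<lambda>i. l $ i) UNIV = 1" using lsum .
    show ?thesis
    proof (intro exI allI)
      fix w
      have "g w \<le> (\<Sum>i\<in>UNIV. l $ i * (a i + r / 2 * (norm (z i - w))\<^sup>2))"
        unfolding g_def by (intro sum_mono mult_left_mono lnn E1[OF Eeq fz])
      also have "\<dots> = (\<Sum>i\<in>UNIV. l $ i * a i) + r / 2 * (\<Sum>i\<in>UNIV. l $ i * (norm (z i - w))\<^sup>2)"
        by (simp add: sum.distrib sum_distrib_left algebra_simps)
      finally have gw: "g w \<le> (\<Sum>i\<in>UNIV. l $ i * a i) + r / 2 * (\<Sum>i\<in>UNIV. l $ i * (norm (z i - w))\<^sup>2)" .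
      have gy: "(\<Sum>i\<in>UNIV. l $ i * a i) + r / 2 * (\<Sum>i\<in>UNIV. l $ i * (norm (z i - y))\<^sup>2) \<le> g y + \<epsilon>"
      proof -
        have "(\<Sum>i\<in>UNIV. l $ i * a i) + r / 2 * (\<Sum>i\<in>UNIV. l $ i * (norm (z i - y))\<^sup>2)
            = (\<Sum>i\<in>UNIV. l $ i * (a i + r / 2 * (norm (z i - y))\<^sup>2))"
          by (simp add: sum.distrib sum_distrib_left algebra_simps)
        also have "\<dots> \<le> (\<Sum>i\<in>UNIV. l $ i * (E i y + \<epsilon>))"
          by (intro sum_mono mult_left_mono lnn less_imp_le[OF az])
        also have "\<dots> = g y + (\<Sum>i\<in>UNIV. l $ i) * \<epsilon>"
          unfolding g_def distrib_left sum.distrib sum_distrib_right by simp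
        finally show ?thesis using lsum by simp
      qed
      have v1: "(\<Sum>i\<in>UNIV. l $ i * (norm (z i - w))\<^sup>2) = (\<Sum>i\<in>UNIV. l $ i * (norm (z i))\<^sup>2) - 2 * inner x' w + (norm w)\<^sup>2"
        unfolding x'_def by (rule var_id[OF lsum'])
      have v2: "(\<Sum>i\<in>UNIV. l $ i * (norm (z i - y))\<^sup>2) = (\<Sum>i\<in>UNIV. l $ i * (norm (z i))\<^sup>2) - 2 * inner x' y + (norm y)\<^sup>2"
        unfolding x'_def by (rule var_id[OF lsum'])
      have n1: "(norm (w - x'))\<^sup>2 = (norm w)\<^sup>2 - 2 * inner x' w + (norm x')\<^sup>2"
        unfolding power2_norm_eq_inner inner_diff_left inner_diff_right inner_commute[of w x'] by simp
      have n2: "0 \<le> (norm x')\<^sup>2 - 2 * inner x' y + (norm y)\<^sup>2"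
      proof -
        have "(norm (x' - y))\<^sup>2 = (norm x')\<^sup>2 - 2 * inner x' y + (norm y)\<^sup>2"
          unfolding power2_norm_eq_inner inner_diff_left inner_diff_right inner_commute[of y x'] by simp
        then show ?thesis by (metis zero_le_power2)
      qed
      have "(\<Sum>i\<in>UNIV. l $ i * (norm (z i - w))\<^sup>2) - (norm (w - x'))\<^sup>2 \<le> (\<Sum>i\<in>UNIV. l $ i * (norm (z i - y))\<^sup>2)"
        unfolding v1 v2 n1 using n2 by linarith
      then have "r / 2 * ((\<Sum>i\<in>UNIV. l $ i * (norm (z i - w))\<^sup>2) - (norm (w - x'))\<^sup>2)
          \<le> r / 2 * (\<Sum>i\<in>UNIV. l $ i * (norm (z i - y))\<^sup>2)"
        using rpos by (intro mult_left_mono) auto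
      then have "r / 2 * (\<Sum>i\<in>UNIV. l $ i * (norm (z i - w))\<^sup>2) - r / 2 * (norm (w - x'))\<^sup>2
          \<le> r / 2 * (\<Sum>i\<in>UNIV. l $ i * (norm (z i - y))\<^sup>2)"
        by (simp only: right_diff_distrib)
      then show "g w - r / 2 * (norm (w - x'))\<^sup>2 \<le> g y + \<epsilon>" using gw gy by linarith
    qed
  qed
  have A: "argmin_set (\<lambda>x. - moreau_env s (\<lambda>y. - ereal (g y)) x) = argmin_set (\<lambda>x. ereal (g x))"
    if "r \<le> s" for s
    by (rule abstract_argmin[OF hC hB that]) auto
  show ?thesis
    unfolding peq weq using A[of "r + \<delta> l"] A[of r] dnn by simp
qed

end
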